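(* If a UCPT$(n)$-map $T$ has an exact factorization through $M_n(\mathbb{C})\otimes M_k(\mathbb{C})$ for some integer $k\geq1$, then $T$ is factorizable of degree $k$.
   Context: A UCPT$(n)$-map is a unital completely positive trace-preserving linear map on $M_n(\mathbb{C})$; $\tau_k$ is the normalized trace on $M_k(\mathbb{C})$. $T$ has an exact factorization through $M_n(\mathbb{C})\otimes M_k(\mathbb{C})$ if there is a unitary $u\in M_n(\mathbb{C})\otimes M_k(\mathbb{C})$ with $T(x)=(\mathrm{id}_n\otimes\tau_k)(u^*(x\otimes1_k)u)$ for all $x\in M_n(\mathbb{C})$. $T$ is factorizable of degree $k$ if $T\otimes S_k\in\mathrm{conv}(\mathrm{Aut}(M_n(\mathbb{C})\otimes M_k(\mathbb{C})))$, where $S_k(y)=\tau_k(y)1_k$, $\mathrm{Aut}$ consists of the maps $x\mapsto u^*xu$ with $u$ unitary, and $\mathrm{conv}$ is convex hull. *)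

theory Defs
  imports "Jordan_Normal_Form.Matrix"
begin

text \<open>M_n(C) (x) M_k(C) is identified with M_(n*k)(C) via the Kronecker convention:
  the basis index (i,a) with i<n, a<k corresponds to i*k+a.\<close>

definition mtrace :: "complex mat \<Rightarrow> complex" where
  "mtrace A = (\<Sum>i<dim_row A. A $$ (i,i))"

definition madj :: "complex mat \<Rightarrow> complex mat" where
  "madj A = mat (dim_col A) (dim_row A) (\<lambda>(i,j). cnj (A $$ (j,i)))"

definition unitary_mat :: "nat \<Rightarrow> complex mat \<Rightarrow> bool" where
  "unitary_mat d U \<longleftrightarrow> U \<in> carrier_mat d d \<and> madj U * U = 1\<^sub>m d \<and> U * madj U = 1\<^sub>m d"

definition kron :: "complex mat \<Rightarrow> complex mat \<Rightarrow> complex mat" where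
  "kron A B = mat (dim_row A * dim_row B) (dim_col A * dim_col B)
     (\<lambda>(p,q). A $$ (p div dim_row B, q div dim_col B) * B $$ (p mod dim_row B, q mod dim_col B))"

definition psd :: "nat \<Rightarrow> complex mat \<Rightarrow> bool" where
  "psd d A \<longleftrightarrow> A \<in> carrier_mat d d \<and> madj A = A \<and>
     (\<forall>v :: nat \<Rightarrow> complex. 0 \<le> Re (\<Sum>i<d. \<Sum>j<d. cnj (v i) * A $$ (i,j) * v j))"

definition munit :: "nat \<Rightarrow> nat \<Rightarrow> nat \<Rightarrow> complex mat" where
  "munit d i j = mat d d (\<lambda>(p,q). if p = i \<and> q = j then 1 else 0)"

definition map_tensor :: "nat \<Rightarrow> nat \<Rightarrow> (complex mat \<Rightarrow> complex mat) \<Rightarrow> (complex mat \<Rightarrow> complex mat)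
    \<Rightarrow> complex mat \<Rightarrow> complex mat" where
  "map_tensor n k A B Y = mat (n*k) (n*k) (\<lambda>(p,q).
     \<Sum>i<n. \<Sum>j<n. \<Sum>a<k. \<Sum>b<k.
       Y $$ (i*k+a, j*k+b) * kron (A (munit n i j)) (B (munit k a b)) $$ (p,q))"

definition id_map :: "complex mat \<Rightarrow> complex mat" where
  "id_map x = x"

definition lin_map :: "nat \<Rightarrow> (complex mat \<Rightarrow> complex mat) \<Rightarrow> bool" where
  "lin_map d T \<longleftrightarrow> (\<forall>x \<in> carrier_mat d d. T x \<in> carrier_mat d d) \<and>
     (\<forall>x \<in> carrier_mat d d. \<forall>y \<in> carrier_mat d d. T (x + y) = T x + T y) \<and>
     (\<forall>c. \<forall>x \<in> carrier_mat d d. T (c \<cdot>\<^sub>m x) = c \<cdot>\<^sub>m T x)"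

definition completely_positive :: "nat \<Rightarrow> (complex mat \<Rightarrow> complex mat) \<Rightarrow> bool" where
  "completely_positive n T \<longleftrightarrow>
     (\<forall>m \<ge> 1. \<forall>X. psd (n*m) X \<longrightarrow> psd (n*m) (map_tensor n m T id_map X))"

definition UCPT :: "nat \<Rightarrow> (complex mat \<Rightarrow> complex mat) \<Rightarrow> bool" where
  "UCPT n T \<longleftrightarrow> lin_map n T \<and> T (1\<^sub>m n) = 1\<^sub>m n \<and> completely_positive n T \<and>
     (\<forall>x \<in> carrier_mat n n. mtrace (T x) = mtrace x)"

definition ptrace_norm :: "nat \<Rightarrow> nat \<Rightarrow> complex mat \<Rightarrow> complex mat" where
  "ptrace_norm n k Y = mat n n (\<lambda>(i,j). (\<Sum>a<k. Y $$ (i*k+a, j*k+a)) / of_nat k)"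

definition exact_factorization :: "nat \<Rightarrow> nat \<Rightarrow> (complex mat \<Rightarrow> complex mat) \<Rightarrow> bool" where
  "exact_factorization n k T \<longleftrightarrow> (\<exists>u. unitary_mat (n*k) u \<and>
     (\<forall>x \<in> carrier_mat n n. T x = ptrace_norm n k (madj u * kron x (1\<^sub>m k) * u)))"

definition S_map :: "nat \<Rightarrow> complex mat \<Rightarrow> complex mat" where
  "S_map k y = (mtrace y / of_nat k) \<cdot>\<^sub>m 1\<^sub>m k"

text \<open>Membership of a map on M_d in the convex hull of Aut(M_d) = {x \<mapsto> u^* x u}:
  a finite convex combination, maps compared on M_d.\<close>
definition in_conv_Aut :: "nat \<Rightarrow> (complex mat \<Rightarrow> complex mat) \<Rightarrow> bool" where
  "in_conv_Aut d \<Phi> \<longleftrightarrow> (\<exists>(ws :: real list) us. length ws = length us \<and>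
     (\<forall>w \<in> set ws. 0 \<le> w) \<and> sum_list ws = 1 \<and> (\<forall>u \<in> set us. unitary_mat d u) \<and>
     (\<forall>Y \<in> carrier_mat d d. \<Phi> Y = mat d d (\<lambda>(p,q).
        \<Sum>l<length ws. complex_of_real (ws ! l) * (madj (us ! l) * Y * us ! l) $$ (p,q))))"

definition factorizable_deg :: "nat \<Rightarrow> nat \<Rightarrow> (complex mat \<Rightarrow> complex mat) \<Rightarrow> bool" where
  "factorizable_deg n k T \<longleftrightarrow> in_conv_Aut (n*k) (map_tensor n k T (S_map k))"

end

theory Submission imports Defs "Jordan_Normal_Form.Determinant" begin

lemma cis_ne_1:
  fixes m :: int and k :: nat
  assumes "0 < \<bar>m\<bar>" "\<bar>m\<bar> < int k"
  shows "cis (2*pi*real_of_int m / real k) \<noteq> 1"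
proof
  assume "cis (2*pi*real_of_int m / real k) = 1"
  hence "cos (2*pi*real_of_int m / real k) = 1"
    by (metis cis.sel(1) one_complex.sel(1))
  then obtain j :: int where j: "2*pi*real_of_int m / real k = j*2*pi"
    by (auto simp: cos_one_2pi_int)
  have kp: "real k > 0" using assms by simp
  from j have "real_of_int m = j * real k" using kp by (simp add: field_simps)
  hence "m = j * int k" by (metis of_int_eq_iff of_int_mult of_int_of_nat_eq)
  moreover have "j \<noteq> 0" using assms \<open>m = j * int k\<close> by auto
  hence "\<bar>j\<bar> * int k \<ge> 1 * int k" by (intro mult_right_mono) auto
  moreover have "\<bar>m\<bar> = \<bar>j\<bar> * int k" using \<open>m = j * int k\<close> by (simp add: abs_mult)
  ultimately show False using assms by linarith
qed

lemma root_sum: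
  fixes k p q :: nat
  assumes "k \<ge> 1" "p < k" "q < k"
  shows "(\<Sum>b<k. cnj (cis (2*pi/k) ^ (b*p)) * cis (2*pi/k) ^ (b*q)) = (if p = q then of_nat k else 0)"
proof -
  define z where "z = cis (2*pi*real_of_int (int q - int p) / real k)"
  have trm: "cnj (cis (2*pi/k) ^ (b*p)) * cis (2*pi/k) ^ (b*q) = z ^ b" for b
    unfolding z_def DeMoivre cis_cnj cis_mult
    by (rule arg_cong[where f=cis]) (use assms in \<open>simp add: field_simps\<close>)
  show ?thesis
  proof (cases "p = q")
    case True
    then show ?thesis unfolding trm z_def by simp
  next
    case False
    have "z \<noteq> 1" unfolding z_def using False assms by (intro cis_ne_1) auto
    moreover have "z ^ k = 1" unfolding z_def DeMoivre
    proof -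
      have "real k * (2 * pi * real_of_int (int q - int p) / real k) = 2*pi*real_of_int (int q - int p)"
        using assms by simp
      thus "cis (real k * (2 * pi * real_of_int (int q - int p) / real k)) = 1"
        by (metis Ints_of_int cis_multiple_2pi)
    qed
    ultimately show ?thesis unfolding trm using False by (simp add: sum_gp_strict)
  qed
qed

lemma madj_carrier[simp]: "A \<in> carrier_mat a b \<Longrightarrow> madj A \<in> carrier_mat b a"
  unfolding madj_def by auto

lemma madj_dims[simp]: "dim_row (madj A) = dim_col A" "dim_col (madj A) = dim_row A"
  unfolding madj_def by auto

lemma madj_index[simp]: "i < dim_col A \<Longrightarrow> j < dim_row A \<Longrightarrow> madj A $$ (i,j) = cnj (A $$ (j,i))"
  unfolding madj_def by auto

lemma madj_mult:
  assumes "A \<in> carrier_mat a b" "B \<in> carrier_mat b c"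
  shows "madj (A * B) = madj B * madj A"
  using assms
  by (intro eq_matI) (auto simp: scalar_prod_def row_def col_def mult.commute)

lemma triple_entry:
  fixes A M B :: "complex mat"
  assumes "A \<in> carrier_mat d d" "M \<in> carrier_mat d d" "B \<in> carrier_mat d d" "p < d" "q < d"
  shows "(A * M * B) $$ (p,q) = (\<Sum>s<d. \<Sum>r<d. A $$ (p,r) * M $$ (r,s) * B $$ (s,q))"
  using assms
  apply (simp add: scalar_prod_def row_def col_def sum_distrib_right lessThan_atLeast0)
  apply (subst sum.swap)
  apply (simp add: sum_distrib_left mult.assoc)
  done

lemma triple_lin:
  fixes A B :: "complex mat" and f :: "'i \<Rightarrow> complex mat"
  assumes F: "finite F" and f: "\<And>i. i \<in> F \<Longrightarrow> f i \<in> carrier_mat d d"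
    and A: "A \<in> carrier_mat d d" and B: "B \<in> carrier_mat d d"
  shows "A * mat d d (\<lambda>(p,q). \<Sum>i\<in>F. c i * f i $$ (p,q)) * B
       = mat d d (\<lambda>(p,q). \<Sum>i\<in>F. c i * (A * f i * B) $$ (p,q))"
proof (rule eq_matI)
  fix p q assume pq: "p < dim_row (mat d d (\<lambda>(p,q). \<Sum>i\<in>F. c i * (A * f i * B) $$ (p,q)))"
     "q < dim_col (mat d d (\<lambda>(p,q). \<Sum>i\<in>F. c i * (A * f i * B) $$ (p,q)))"
  hence p: "p < d" and q: "q < d" by auto
  have "(A * mat d d (\<lambda>(p,q). \<Sum>i\<in>F. c i * f i $$ (p,q)) * B) $$ (p,q)
     = (\<Sum>s<d. \<Sum>r<d. A $$ (p,r) * (\<Sum>i\<in>F. c i * f i $$ (r,s)) * B $$ (s,q))"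
    using p q A B by (subst triple_entry) auto
  also have "\<dots> = (\<Sum>s<d. \<Sum>r<d. \<Sum>i\<in>F. c i * (A $$ (p,r) * f i $$ (r,s) * B $$ (s,q)))"
    by (intro sum.cong refl, unfold sum_distrib_left sum_distrib_right, rule sum.cong) (simp_all add: mult_ac)
  also have "\<dots> = (\<Sum>i\<in>F. \<Sum>s<d. \<Sum>r<d. c i * (A $$ (p,r) * f i $$ (r,s) * B $$ (s,q)))"
    by (simp only: sum.swap[where A="{..<d}" and B=F])
  also have "\<dots> = (\<Sum>i\<in>F. c i * (\<Sum>s<d. \<Sum>r<d. A $$ (p,r) * f i $$ (r,s) * B $$ (s,q)))"
    by (simp add: sum_distrib_left)
  also have "\<dots> = (\<Sum>i\<in>F. c i * (A * f i * B) $$ (p,q))"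
    using p q A B f by (intro sum.cong refl arg_cong[where f="\<lambda>x. _ * x"] triple_entry[symmetric]) auto
  finally show "(A * mat d d (\<lambda>(p,q). \<Sum>i\<in>F. c i * f i $$ (p,q)) * B) $$ (p,q)
     = mat d d (\<lambda>(p,q). \<Sum>i\<in>F. c i * (A * f i * B) $$ (p,q)) $$ (p,q)" using p q by simp
qed (use A B in auto)

definition mono :: "nat \<Rightarrow> (nat \<Rightarrow> nat) \<Rightarrow> (nat \<Rightarrow> complex) \<Rightarrow> complex mat" where
  "mono d \<pi> c = mat d d (\<lambda>(s,q). if s = \<pi> q then c q else 0)"

lemma mono_dims[simp]: "dim_row (mono d \<pi> c) = d" "dim_col (mono d \<pi> c) = d" unfolding mono_def by auto

lemma mono_carrier[simp]: "mono d \<pi> c \<in> carrier_mat d d" unfolding mono_def by auto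

lemma mono_ad:
  assumes pi: "\<And>q. q < d \<Longrightarrow> \<pi> q < d" and Z: "Z \<in> carrier_mat d d" and p: "p < d" and q: "q < d"
  shows "(madj (mono d \<pi> c) * Z * mono d \<pi> c) $$ (p,q) = cnj (c p) * Z $$ (\<pi> p, \<pi> q) * c q"
proof -
  have "(madj (mono d \<pi> c) * Z * mono d \<pi> c) $$ (p,q)
    = (\<Sum>s<d. \<Sum>r<d. (if r = \<pi> p then cnj (c p) else 0) * Z $$ (r,s) * (if s = \<pi> q then c q else 0))"
    using p q Z by (subst triple_entry) (auto simp: mono_def intro!: sum.cong)
  also have "\<dots> = (\<Sum>s<d. \<Sum>r<d. if r = \<pi> p then (if s = \<pi> q then cnj (c p) * Z $$ (r, s) * c q else 0) else 0)"
    by (intro sum.cong refl) simp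
  also have "\<dots> = cnj (c p) * Z $$ (\<pi> p, \<pi> q) * c q"
    using pi p q by (simp add: sum.delta)
  finally show ?thesis .
qed

lemma mono_unitary:
  assumes pi: "\<And>q. q < d \<Longrightarrow> \<pi> q < d" and inj: "inj_on \<pi> {..<d}"
    and c: "\<And>q. q < d \<Longrightarrow> cnj (c q) * c q = 1"
  shows "unitary_mat d (mono d \<pi> c)"
proof -
  have 1: "madj (mono d \<pi> c) * mono d \<pi> c = 1\<^sub>m d"
  proof (rule eq_matI)
    fix p q assume "p < dim_row (1\<^sub>m d :: complex mat)" "q < dim_col (1\<^sub>m d :: complex mat)"
    hence p: "p < d" and q: "q < d" by auto
    have "(madj (mono d \<pi> c) * mono d \<pi> c) $$ (p,q) = (madj (mono d \<pi> c) * 1\<^sub>m d * mono d \<pi> c) $$ (p,q)"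
      by (metis madj_carrier mono_carrier right_mult_one_mat)
    also have "\<dots> = cnj (c p) * (1\<^sub>m d) $$ (\<pi> p, \<pi> q) * c q"
      by (rule mono_ad[OF pi one_carrier_mat p q]) 
    also have "\<dots> = 1\<^sub>m d $$ (p,q)"
      using pi[OF p] pi[OF q] p q c[OF p] inj_onD[OF inj, of p q] by auto
    finally show "(madj (mono d \<pi> c) * mono d \<pi> c) $$ (p,q) = 1\<^sub>m d $$ (p,q)" .
  qed auto
  moreover have "mono d \<pi> c * madj (mono d \<pi> c) = 1\<^sub>m d"
    by (rule mat_mult_left_right_inverse[OF _ _ 1]) auto
  ultimately show ?thesis unfolding unitary_mat_def by auto
qed

lemma lin_zero:
  assumes T: "lin_map d T"
  shows "T (0\<^sub>m d d) = 0\<^sub>m d d"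
proof -
  have c: "T (1\<^sub>m d) \<in> carrier_mat d d" using T unfolding lin_map_def by auto
  have "0\<^sub>m d d = (0::complex) \<cdot>\<^sub>m (1\<^sub>m d :: complex mat)" by (intro eq_matI) auto
  hence "T (0\<^sub>m d d) = 0 \<cdot>\<^sub>m T (1\<^sub>m d)" using T unfolding lin_map_def by auto
  also have "\<dots> = 0\<^sub>m d d" using c by (intro eq_matI) auto
  finally show ?thesis .
qed

lemma lin_expand_F:
  assumes T: "lin_map d T" and X: "X \<in> carrier_mat d d"
    and F: "F \<subseteq> {..<d} \<times> {..<d}"
  shows "T (mat d d (\<lambda>x. if x \<in> F then X $$ x else 0))
       = mat d d (\<lambda>rs. \<Sum>x\<in>F. X $$ x * T (munit d (fst x) (snd x)) $$ rs)"
proof -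
  have "finite F" using F by (rule finite_subset) auto
  from this F show ?thesis
  proof (induction F rule: finite_induct)
    case empty
    have "mat d d (\<lambda>x. if x \<in> {} then X $$ x else 0) = 0\<^sub>m d d" by (intro eq_matI) auto
    moreover have "mat d d (\<lambda>rs. \<Sum>x\<in>{}. X $$ x * T (munit d (fst x) (snd x)) $$ rs) = 0\<^sub>m d d"
      by (intro eq_matI) auto
    ultimately show ?case using lin_zero[OF T] by (simp add: zero_mat_def)
  next
    case (insert x F)
    obtain a b where x: "x = (a,b)" by (cases x)
    have ab: "a < d" "b < d" using insert x by auto
    let ?M = "mat d d (\<lambda>x. if x \<in> F then X $$ x else 0)"
    have MF: "?M \<in> carrier_mat d d" by simp
    have U: "munit d a b \<in> carrier_mat d d" unfolding munit_def by simp
    have eq: "mat d d (\<lambda>y. if y \<in> insert x F then X $$ y else 0)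
       = ?M + X $$ (a,b) \<cdot>\<^sub>m munit d a b"
      using insert x by (intro eq_matI) (auto simp: munit_def)
    have TU: "T (munit d a b) \<in> carrier_mat d d" using T U unfolding lin_map_def by auto
    have TM: "T ?M \<in> carrier_mat d d" using T MF unfolding lin_map_def by auto
    have "T (?M + X $$ (a,b) \<cdot>\<^sub>m munit d a b) = T ?M + X $$ (a,b) \<cdot>\<^sub>m T (munit d a b)"
      using T MF U unfolding lin_map_def by auto
    also have "\<dots> = mat d d (\<lambda>rs. \<Sum>x\<in>F. X $$ x * T (munit d (fst x) (snd x)) $$ rs) + X $$ (a,b) \<cdot>\<^sub>m T (munit d a b)"
      using insert.IH insert.prems by auto
    also have "\<dots> = mat d d (\<lambda>rs. \<Sum>x\<in>insert x F. X $$ x * T (munit d (fst x) (snd x)) $$ rs)"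
      using insert TU x by (intro eq_matI) auto
    finally show ?case using eq by simp
  qed
qed

lemma lin_expand:
  assumes T: "lin_map d T" and X: "X \<in> carrier_mat d d" and r: "r < d" and s: "s < d"
  shows "T X $$ (r,s) = (\<Sum>i<d. \<Sum>j<d. X $$ (i,j) * T (munit d i j) $$ (r,s))"
proof -
  have "X = mat d d (\<lambda>x. if x \<in> {..<d} \<times> {..<d} then X $$ x else 0)"
    using X by (intro eq_matI) auto
  hence "T X = T (mat d d (\<lambda>x. if x \<in> {..<d} \<times> {..<d} then X $$ x else 0))" by (rule arg_cong)
  also have "\<dots> = mat d d (\<lambda>rs. \<Sum>x\<in>{..<d} \<times> {..<d}. X $$ x * T (munit d (fst x) (snd x)) $$ rs)"
    by (rule lin_expand_F[OF T X]) auto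
  finally have "T X = mat d d (\<lambda>rs. \<Sum>x\<in>{..<d} \<times> {..<d}. X $$ x * T (munit d (fst x) (snd x)) $$ rs)" .
  thus ?thesis using r s by (simp add: sum.cartesian_product split_def)
qed

lemma munit_carrier[simp]: "munit d i j \<in> carrier_mat d d" unfolding munit_def by auto

lemma mtrace_munit: "a < k \<Longrightarrow> b < k \<Longrightarrow> mtrace (munit k a b) = (if a = b then 1 else 0)"
  unfolding mtrace_def munit_def by (cases "a = b") (auto simp: sum.delta intro!: sum.neutral)

lemma S_munit: "a < k \<Longrightarrow> b < k \<Longrightarrow> r < k \<Longrightarrow> s < k \<Longrightarrow>
   S_map k (munit k a b) $$ (r,s) = (if a = b then 1 / of_nat k else 0) * (if r = s then 1 else 0)"
  unfolding S_map_def by (simp add: mtrace_munit)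

lemma S_dims[simp]: "dim_row (S_map k y) = k" "dim_col (S_map k y) = k"
  unfolding S_map_def by auto

lemma div_lt: "p < n * k \<Longrightarrow> p div k < (n::nat)"
  by (simp add: less_mult_imp_div_less)

lemma lemA:
  assumes T: "lin_map n T" and Y: "Y \<in> carrier_mat (n*k) (n*k)" and k: "k \<ge> 1"
  shows "map_tensor n k T (S_map k) Y = kron (T (ptrace_norm n k Y)) (1\<^sub>m k)"
proof -
  have TE: "T (munit n i j) \<in> carrier_mat n n" for i j using T unfolding lin_map_def by auto
  have PY: "ptrace_norm n k Y \<in> carrier_mat n n" unfolding ptrace_norm_def by auto
  have TPY: "T (ptrace_norm n k Y) \<in> carrier_mat n n" using T PY unfolding lin_map_def by auto
  show ?thesis
  proof (rule eq_matI)
    fix p q assume "p < dim_row (kron (T (ptrace_norm n k Y)) (1\<^sub>m k))"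
      "q < dim_col (kron (T (ptrace_norm n k Y)) (1\<^sub>m k))"
    hence p: "p < n*k" and q: "q < n*k" using TPY unfolding kron_def by auto
    have pd: "p div k < n" "q div k < n" using p q div_lt by auto
    have pm: "p mod k < k" "q mod k < k" using k by auto
    define \<delta> where "\<delta> = (if p mod k = q mod k then 1 else (0::complex))"
    have kr: "kron (T (munit n i j)) (S_map k (munit k a b)) $$ (p,q)
       = T (munit n i j) $$ (p div k, q div k) * ((if a = b then 1 / of_nat k else 0) * \<delta>)"
      if "a < k" "b < k" for i j a b
      using TE[of i j] p q that pm unfolding kron_def \<delta>_def by (simp add: S_munit)
    have inner: "(\<Sum>a<k. \<Sum>b<k. Y $$ (i*k+a, j*k+b) * kron (T (munit n i j)) (S_map k (munit k a b)) $$ (p,q))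
       = ptrace_norm n k Y $$ (i,j) * T (munit n i j) $$ (p div k, q div k) * \<delta>" if ij: "i < n" "j < n" for i j
    proof -
      have "(\<Sum>a<k. \<Sum>b<k. Y $$ (i*k+a, j*k+b) * kron (T (munit n i j)) (S_map k (munit k a b)) $$ (p,q))
        = (\<Sum>a<k. \<Sum>b<k. if a = b then Y $$ (i*k+a, j*k+a) * T (munit n i j) $$ (p div k, q div k) * \<delta> / of_nat k else 0)"
        by (intro sum.cong refl) (simp add: kr)
      also have "\<dots> = (\<Sum>a<k. Y $$ (i*k+a, j*k+a)) * T (munit n i j) $$ (p div k, q div k) * \<delta> / of_nat k"
        by (simp add: sum.delta sum_distrib_right sum_divide_distrib)
      also have "\<dots> = ptrace_norm n k Y $$ (i,j) * T (munit n i j) $$ (p div k, q div k) * \<delta>"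
        using ij unfolding ptrace_norm_def by simp
      finally show ?thesis .
    qed
    have "map_tensor n k T (S_map k) Y $$ (p,q)
      = (\<Sum>i<n. \<Sum>j<n. ptrace_norm n k Y $$ (i,j) * T (munit n i j) $$ (p div k, q div k) * \<delta>)"
      unfolding map_tensor_def using p q inner by simp
    also have "\<dots> = T (ptrace_norm n k Y) $$ (p div k, q div k) * \<delta>"
      by (simp add: lin_expand[OF T PY pd] sum_distrib_right)
    also have "\<dots> = kron (T (ptrace_norm n k Y)) (1\<^sub>m k) $$ (p,q)"
      using TPY p q pm unfolding kron_def \<delta>_def by simp
    finally show "map_tensor n k T (S_map k) Y $$ (p,q) = kron (T (ptrace_norm n k Y)) (1\<^sub>m k) $$ (p,q)" .
  qed (use TPY in \<open>auto simp: kron_def map_tensor_def\<close>)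
qed
lemma mod_shift_inj:
  fixes x y a k :: nat
  assumes "(x + a) mod k = (y + a) mod k" "x < k" "y < k"
  shows "x = y"
proof -
  have *: "u = v" if "u \<le> v" "(u + a) mod k = (v + a) mod k" "v < k" for u v
  proof -
    have "k dvd (v + a) - (u + a)" using that by (subst mod_eq_dvd_iff_nat[symmetric]) auto
    hence "k dvd v - u" by simp
    moreover have "v - u < k" using that by simp
    ultimately have "v - u = 0" using dvd_imp_le by fastforce
    thus ?thesis using that by simp
  qed
  show ?thesis using *[of x y] *[of y x] assms by (cases "x \<le> y") auto
qed

definition om :: "nat \<Rightarrow> complex" where "om k = cis (2*pi/k)"
definition sh :: "nat \<Rightarrow> nat \<Rightarrow> nat \<Rightarrow> nat" where "sh k a q = (q div k)*k + (q mod k + a) mod k"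
definition cw :: "nat \<Rightarrow> nat \<Rightarrow> nat \<Rightarrow> complex" where "cw k b q = om k ^ (b * (q mod k))"
definition VV :: "nat \<Rightarrow> nat \<Rightarrow> nat \<Rightarrow> nat \<Rightarrow> complex mat" where
  "VV n k a b = mono (n*k) (sh k a) (cw k b)"

lemma sh_lt: assumes "q < n*k" "k \<ge> 1" shows "sh k a q < n*k"
proof -
  have "q div k + 1 \<le> n" using assms div_lt by (simp add: Suc_le_eq)
  hence "(q div k + 1) * k \<le> n * k" by (rule mult_le_mono1)
  moreover have "(q mod k + a) mod k < k" using assms by simp
  ultimately show ?thesis unfolding sh_def by simp
qed

lemma sh_div: "k \<ge> 1 \<Longrightarrow> sh k a q div k = q div k" unfolding sh_def by simp
lemma sh_mod: "k \<ge> 1 \<Longrightarrow> sh k a q mod k = (q mod k + a) mod k" unfolding sh_def by simp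

lemma sh_inj: assumes "k \<ge> 1" shows "inj_on (sh k a) UNIV"
proof
  fix p q assume "sh k a p = sh k a q"
  hence d: "p div k = q div k" and m: "(p mod k + a) mod k = (q mod k + a) mod k"
    using sh_div[OF assms] sh_mod[OF assms] by metis+
  have "p mod k = q mod k" using mod_shift_inj[OF m] assms by simp
  thus "p = q" using d by (metis div_mult_mod_eq)
qed

lemma cw_unit: "cnj (cw k b q) * cw k b q = 1"
  unfolding cw_def om_def by (simp add: DeMoivre cis_cnj cis_mult)

lemma VV_unitary: "k \<ge> 1 \<Longrightarrow> unitary_mat (n*k) (VV n k a b)"
  unfolding VV_def
  by (rule mono_unitary) (auto intro: sh_lt cw_unit inj_on_subset[OF sh_inj])

lemma VV_carrier[simp]: "VV n k a b \<in> carrier_mat (n*k) (n*k)" unfolding VV_def by simp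

lemma shift_sum:
  fixes g :: "nat \<Rightarrow> complex"
  assumes "c < k"
  shows "(\<Sum>a<k. g ((c + a) mod k)) = (\<Sum>a<k. g a)"
proof -
  have inj: "inj_on (\<lambda>a. (c + a) mod k) {..<k}"
    by (rule inj_onI) (metis add.commute lessThan_iff mod_shift_inj)
  have "(\<lambda>a. (c + a) mod k) ` {..<k} = {..<k}"
    using assms by (intro endo_inj_surj inj) auto
  hence "bij_betw (\<lambda>a. (c + a) mod k) {..<k} {..<k}" using inj unfolding bij_betw_def by simp
  thus ?thesis by (rule sum.reindex_bij_betw)
qed

lemma lemB:
  assumes Z: "Z \<in> carrier_mat (n*k) (n*k)" and k: "k \<ge> 1"
  shows "kron (ptrace_norm n k Z) (1\<^sub>m k) = mat (n*k) (n*k) (\<lambda>(p,q).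
     \<Sum>x\<in>{..<k}\<times>{..<k}. complex_of_real (1 / (real k * real k)) * (madj (VV n k (fst x) (snd x)) * Z * VV n k (fst x) (snd x)) $$ (p,q))"
proof (rule eq_matI)
  fix p q assume "p < dim_row (mat (n*k) (n*k) (\<lambda>(p,q).
     \<Sum>x\<in>{..<k}\<times>{..<k}. complex_of_real (1 / (real k * real k)) * (madj (VV n k (fst x) (snd x)) * Z * VV n k (fst x) (snd x)) $$ (p,q)))"
    "q < dim_col (mat (n*k) (n*k) (\<lambda>(p,q).
     \<Sum>x\<in>{..<k}\<times>{..<k}. complex_of_real (1 / (real k * real k)) * (madj (VV n k (fst x) (snd x)) * Z * VV n k (fst x) (snd x)) $$ (p,q)))"
  hence p: "p < n*k" and q: "q < n*k" by auto
  have pd: "p div k < n" "q div k < n" using p q div_lt by auto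
  have pm: "p mod k < k" "q mod k < k" using k by auto
  have ad: "(madj (VV n k a b) * Z * VV n k a b) $$ (p,q)
      = cnj (om k ^ (b * (p mod k))) * Z $$ (sh k a p, sh k a q) * om k ^ (b * (q mod k))" for a b
    unfolding VV_def by (subst mono_ad) (use Z p q k sh_lt in \<open>auto simp: cw_def\<close>)
  have "(\<Sum>x\<in>{..<k}\<times>{..<k}. complex_of_real (1 / (real k * real k)) * (madj (VV n k (fst x) (snd x)) * Z * VV n k (fst x) (snd x)) $$ (p,q))
     = (\<Sum>a<k. \<Sum>b<k. complex_of_real (1 / (real k * real k)) * (Z $$ (sh k a p, sh k a q) * (cnj (om k ^ (b * (p mod k))) * om k ^ (b * (q mod k)))))"
    by (subst sum.cartesian_product) (simp add: split_def ad mult_ac)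
  also have "\<dots> = (\<Sum>a<k. complex_of_real (1 / (real k * real k)) * Z $$ (sh k a p, sh k a q) * (if p mod k = q mod k then of_nat k else 0))"
    unfolding om_def root_sum[OF k pm, symmetric]
    by (intro sum.cong refl) (simp add: sum_distrib_left mult.assoc)
  also have "\<dots> = kron (ptrace_norm n k Z) (1\<^sub>m k) $$ (p,q)"
  proof (cases "p mod k = q mod k")
    case False
    then show ?thesis using p q pd pm unfolding kron_def ptrace_norm_def by simp
  next
    case True
    have "(\<Sum>a<k. Z $$ (sh k a p, sh k a q)) = (\<Sum>a<k. Z $$ (p div k * k + a, q div k * k + a))"
      unfolding sh_def True
      using shift_sum[OF pm(2), of "\<lambda>a. Z $$ (p div k * k + a, q div k * k + a)"] by (simp add: add.commute)
    hence "(\<Sum>a<k. complex_of_real (1 / (real k * real k)) * Z $$ (sh k a p, sh k a q) * of_nat k)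
      = (\<Sum>a<k. Z $$ (p div k * k + a, q div k * k + a)) / of_nat k"
      using k by (simp add: sum_divide_distrib[symmetric])
    then show ?thesis using True p q pd pm unfolding kron_def ptrace_norm_def by simp
  qed
  finally show "kron (ptrace_norm n k Z) (1\<^sub>m k) $$ (p,q) = mat (n*k) (n*k) (\<lambda>(p,q).
     \<Sum>x\<in>{..<k}\<times>{..<k}. complex_of_real (1 / (real k * real k)) * (madj (VV n k (fst x) (snd x)) * Z * VV n k (fst x) (snd x)) $$ (p,q)) $$ (p,q)"
    using p q by simp
qed (auto simp: kron_def ptrace_norm_def)

lemma conv_from_set:
  assumes J: "finite J" and w0: "\<And>j. j \<in> J \<Longrightarrow> w j \<ge> 0" and w1: "sum w J = 1"
    and U: "\<And>j. j \<in> J \<Longrightarrow> unitary_mat d (U j)"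
    and \<Phi>: "\<And>Y. Y \<in> carrier_mat d d \<Longrightarrow> \<Phi> Y = mat d d (\<lambda>(p,q).
        \<Sum>j\<in>J. complex_of_real (w j) * (madj (U j) * Y * U j) $$ (p,q))"
  shows "in_conv_Aut d \<Phi>"
proof -
  obtain xs where xs: "set xs = J" "distinct xs" using finite_distinct_list[OF J] by blast
  have sl: "(\<Sum>l<length xs. g (xs ! l)) = sum g J" for g :: "_ \<Rightarrow> 'b::comm_monoid_add"
  proof -
    have "(\<Sum>l<length xs. g (xs ! l)) = sum_list (map g xs)"
      by (simp add: sum_list_sum_nth lessThan_atLeast0)
    also have "\<dots> = sum g J" using xs by (simp add: sum_list_distinct_conv_sum_set)
    finally show ?thesis .
  qed
  show ?thesis unfolding in_conv_Aut_def
  proof (intro exI conjI ballI)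
    show "length (map w xs) = length (map U xs)" by simp
    show "0 \<le> x" if "x \<in> set (map w xs)" for x using that w0 xs by auto
    show "sum_list (map w xs) = 1" using xs w1 by (simp add: sum_list_distinct_conv_sum_set)
    show "unitary_mat d u" if "u \<in> set (map U xs)" for u using that U xs by auto
    fix Y :: "complex mat" assume Y: "Y \<in> carrier_mat d d"
    show "\<Phi> Y = mat d d (\<lambda>(p,q). \<Sum>l<length (map w xs).
        complex_of_real (map w xs ! l) * (madj (map U xs ! l) * Y * map U xs ! l) $$ (p,q))"
      unfolding \<Phi>[OF Y] by (intro eq_matI) (auto simp: sl[symmetric])
  qed
qed

lemma unitary_mult:
  assumes A: "unitary_mat d A" and B: "unitary_mat d B"
  shows "unitary_mat d (A * B)"
proof -
  have Ac: "A \<in> carrier_mat d d" and Bc: "B \<in> carrier_mat d d" using A B unfolding unitary_mat_def by auto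
  have mA: "madj A \<in> carrier_mat d d" and mB: "madj B \<in> carrier_mat d d" using Ac Bc by auto
  have "madj (A * B) * (A * B) = madj B * madj A * (A * B)" using Ac Bc by (simp add: madj_mult)
  also have "\<dots> = madj B * (madj A * (A * B))" using Ac Bc mA mB by (rule_tac assoc_mult_mat) auto
  also have "madj A * (A * B) = (madj A * A) * B" using Ac Bc mA by (rule_tac assoc_mult_mat[symmetric]) auto
  also have "\<dots> = B" using A Bc unfolding unitary_mat_def by simp
  also have "madj B * B = 1\<^sub>m d" using B unfolding unitary_mat_def by simp
  finally have 1: "madj (A * B) * (A * B) = 1\<^sub>m d" .
  have "A * B * madj (A * B) = A * B * (madj B * madj A)" using Ac Bc by (simp add: madj_mult)
  also have "\<dots> = A * (B * (madj B * madj A))" using Ac Bc mA mB by (rule_tac assoc_mult_mat) auto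
  also have "B * (madj B * madj A) = (B * madj B) * madj A" using Bc mA mB by (rule_tac assoc_mult_mat[symmetric]) auto
  also have "\<dots> = madj A" using B mA unfolding unitary_mat_def by (simp add: left_mult_one_mat)
  also have "A * madj A = 1\<^sub>m d" using A unfolding unitary_mat_def by simp
  finally show ?thesis using 1 Ac Bc unfolding unitary_mat_def by auto
qed

theorem corollary3p5:
  fixes n k :: nat and T :: "complex mat \<Rightarrow> complex mat"
  assumes "UCPT n T" and "k \<ge> 1" and "exact_factorization n k T"
  shows "factorizable_deg n k T"
proof -
  have T: "lin_map n T" using assms(1) unfolding UCPT_def by auto
  have k: "k \<ge> 1" by fact
  obtain u where uu: "unitary_mat (n*k) u"
    and fac: "\<And>x. x \<in> carrier_mat n n \<Longrightarrow> T x = ptrace_norm n k (madj u * kron x (1\<^sub>m k) * u)"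
    using assms(3) unfolding exact_factorization_def by auto
  define d where "d = n*k"
  define c where "c = complex_of_real (1 / (real k * real k))"
  define I where "I = {..<k} \<times> {..<k}"
  define W where "W x = VV n k (fst x) (snd x)" for x
  have uc: "u \<in> carrier_mat d d" using uu unfolding unitary_mat_def d_def by auto
  have muc: "madj u \<in> carrier_mat d d" using uc by simp
  have Wc: "W x \<in> carrier_mat d d" for x unfolding W_def d_def by simp
  have mWc: "madj (W x) \<in> carrier_mat d d" for x using Wc by simp
  have fI: "finite I" unfolding I_def by simp
  have adc: "madj V * Z * V \<in> carrier_mat d d" if "V \<in> carrier_mat d d" "Z \<in> carrier_mat d d" for V Z
    by (rule mult_carrier_mat[OF mult_carrier_mat[OF madj_carrier[OF that(1)] that(2)] that(1)])
  have B: "kron (ptrace_norm n k Z) (1\<^sub>m k)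
     = mat d d (\<lambda>(p,q). \<Sum>x\<in>I. c * (madj (W x) * Z * W x) $$ (p,q))" if "Z \<in> carrier_mat d d" for Z
    using lemB[OF that[unfolded d_def] k] unfolding d_def c_def I_def W_def .
  show ?thesis unfolding factorizable_deg_def d_def[symmetric]
  proof (rule conv_from_set[where J = "I \<times> I" and w = "\<lambda>_. 1 / (real k * real k) ^ 2"
        and U = "\<lambda>(x,y). W x * u * W y"])
    show "finite (I \<times> I)" using fI by simp
    show "sum (\<lambda>_. 1 / (real k * real k) ^ 2) (I \<times> I) = 1"
      using k unfolding I_def by (simp add: card_cartesian_product power2_eq_square)
    show "0 \<le> 1 / (real k * real k) ^ 2" for j :: "(nat \<times> nat) \<times> nat \<times> nat" by simp
    show "unitary_mat d ((\<lambda>(x,y). W x * u * W y) j)" for j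
      using uu k unfolding W_def d_def by (auto simp: split_def intro!: unitary_mult VV_unitary)
    fix Y :: "complex mat" assume Y: "Y \<in> carrier_mat d d"
    have PY: "ptrace_norm n k Y \<in> carrier_mat n n" unfolding ptrace_norm_def by auto
    have RYc: "mat d d (\<lambda>(p,q). \<Sum>x\<in>I. c * (madj (W x) * Y * W x) $$ (p,q)) \<in> carrier_mat d d" by simp
    define M where "M = madj u * mat d d (\<lambda>(p,q). \<Sum>x\<in>I. c * (madj (W x) * Y * W x) $$ (p,q)) * u"
    have Mc: "M \<in> carrier_mat d d" unfolding M_def by (rule mult_carrier_mat[OF mult_carrier_mat[OF muc RYc] uc])
    have M: "M = mat d d (\<lambda>(p,q). \<Sum>x\<in>I. c * (madj u * (madj (W x) * Y * W x) * u) $$ (p,q))"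
      unfolding M_def by (rule triple_lin[OF fI _ muc uc]) (use adc Wc Y in auto)
    have LHS: "map_tensor n k T (S_map k) Y = mat d d (\<lambda>(p,q). \<Sum>y\<in>I. c * (madj (W y) * M * W y) $$ (p,q))"
    proof -
      have "map_tensor n k T (S_map k) Y = kron (T (ptrace_norm n k Y)) (1\<^sub>m k)"
        using lemA[OF T _ k] Y unfolding d_def by simp
      also have "\<dots> = kron (ptrace_norm n k (madj u * kron (ptrace_norm n k Y) (1\<^sub>m k) * u)) (1\<^sub>m k)"
        using fac[OF PY] by simp
      also have "\<dots> = kron (ptrace_norm n k M) (1\<^sub>m k)" unfolding M_def B[OF Y] by simp
      also have "\<dots> = mat d d (\<lambda>(p,q). \<Sum>y\<in>I. c * (madj (W y) * M * W y) $$ (p,q))"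
        by (rule B[OF Mc])
      finally show ?thesis .
    qed
    have inner: "(madj (W y) * M * W y) $$ (p,q) = (\<Sum>x\<in>I. c * (madj (W x * u * W y) * Y * (W x * u * W y)) $$ (p,q))"
      if p: "p < d" and q: "q < d" for y p q
    proof -
      have "madj (W y) * M * W y = mat d d (\<lambda>(p,q). \<Sum>x\<in>I. c * (madj (W y) * (madj u * (madj (W x) * Y * W x) * u) * W y) $$ (p,q))"
        unfolding M by (rule triple_lin[OF fI _ mWc Wc]) (use adc Wc Y uc in auto)
      moreover have "madj (W y) * (madj u * (madj (W x) * Y * W x) * u) * W y
          = madj (W x * u * W y) * Y * (W x * u * W y)" for x
        using Wc[of x] Wc[of y] uc muc mWc[of x] mWc[of y] Y
      proof -
        have mc: "A * B \<in> carrier_mat d d" if "A \<in> carrier_mat d d" "B \<in> carrier_mat d d" for A B :: "complex mat"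
          using that by (rule mult_carrier_mat)
        show ?thesis using Wc[of x] Wc[of y] uc muc mWc[of x] mWc[of y] Y
          by (simp add: madj_mult[of _ d d _ d] assoc_mult_mat[of _ d d _ d _ d] mc)
      qed
      ultimately show ?thesis using p q by simp
    qed
    show "map_tensor n k T (S_map k) Y = mat d d (\<lambda>(p,q). \<Sum>j\<in>I \<times> I.
        complex_of_real (1 / (real k * real k) ^ 2) * (madj ((\<lambda>(x,y). W x * u * W y) j) * Y * (\<lambda>(x,y). W x * u * W y) j) $$ (p,q))"
      unfolding LHS
    proof (rule eq_matI)
      fix p q assume "p < dim_row (mat d d (\<lambda>(p,q). \<Sum>j\<in>I \<times> I.
        complex_of_real (1 / (real k * real k) ^ 2) * (madj ((\<lambda>(x,y). W x * u * W y) j) * Y * (\<lambda>(x,y). W x * u * W y) j) $$ (p,q)))"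
        "q < dim_col (mat d d (\<lambda>(p,q). \<Sum>j\<in>I \<times> I.
        complex_of_real (1 / (real k * real k) ^ 2) * (madj ((\<lambda>(x,y). W x * u * W y) j) * Y * (\<lambda>(x,y). W x * u * W y) j) $$ (p,q)))"
      hence p: "p < d" and q: "q < d" by auto
      have "mat d d (\<lambda>(p,q). \<Sum>y\<in>I. c * (madj (W y) * M * W y) $$ (p,q)) $$ (p,q)
          = (\<Sum>y\<in>I. \<Sum>x\<in>I. c * c * (madj (W x * u * W y) * Y * (W x * u * W y)) $$ (p,q))"
        using p q by (simp add: inner sum_distrib_left mult.assoc)
      also have "\<dots> = (\<Sum>j\<in>I \<times> I. complex_of_real (1 / (real k * real k) ^ 2) * (madj ((\<lambda>(x,y). W x * u * W y) j) * Y * (\<lambda>(x,y). W x * u * W y) j) $$ (p,q))"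
        by (subst sum.swap, subst sum.cartesian_product, unfold c_def, intro sum.cong refl) (auto simp: power2_eq_square)
      finally show "mat d d (\<lambda>(p,q). \<Sum>y\<in>I. c * (madj (W y) * M * W y) $$ (p,q)) $$ (p,q) =
        mat d d (\<lambda>(p,q). \<Sum>j\<in>I \<times> I.
        complex_of_real (1 / (real k * real k) ^ 2) * (madj ((\<lambda>(x,y). W x * u * W y) j) * Y * (\<lambda>(x,y). W x * u * W y) j) $$ (p,q)) $$ (p,q)"
        using p q by simp
    qed auto
  qed
qed
end
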